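(* Let $\widetilde V:[-1,1]\to\mathbb R$ be smooth and $V(\vec n)=\widetilde V(\vec n\cdot e_z)$ on $S^2$. Let $\vec n:[0,T]\to S^2$ be a smooth solution of $$D_t^3\dot{\vec n}+R(D_t\dot{\vec n},\dot{\vec n})\dot{\vec n}+\operatorname{grad}V(\vec n)=0 .$$ Then the quantity $$J_z(t)=\Big\langle \tfrac{d}{dt}\big(D_t\dot{\vec n}(t)\big),X(\vec n(t))\Big\rangle-\Big\langle D_t\dot{\vec n}(t),D_tX(\vec n(t))\Big\rangle$$ is constant in $t$.
   Context: $S^2\subset\mathbb R^3$ is the unit sphere with the round metric $\langle\cdot,\cdot\rangle$ (restriction of the Euclidean inner product), Levi--Civita connection $\nabla$, covariant derivative $D_t$ along curves, and $D_t^3\dot{\vec n}=D_t(D_t(D_t\dot{\vec n}))$. Its curvature tensor is $R(a,b)c=(b\cdot c)a-(a\cdot c)b$ for tangent vectors $a,b,c$. $\operatorname{grad}V$ is the Riemannian gradient of $V$ (equivalently the tangential projection of the Euclidean gradient of any smooth extension). $e_z=(0,0,1)$, $X(\vec n)=e_z\times\vec n$ is the Killing vector field generating rotations about the $z$-axis, and $D_tX(\vec n(t))=\nabla_{\dot{\vec n}}X$. In $J_z$, $\tfrac{d}{dt}(D_t\dot{\vec n})$ is the ordinary derivative in $\mathbb R^3$ of the vector $D_t\dot{\vec n}(t)\in\mathbb R^3$. *)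

theory Defs
  imports "HOL-Analysis.Analysis"
begin

fun iderv :: "real \<Rightarrow> real \<Rightarrow> nat \<Rightarrow> (real \<Rightarrow> 'a::real_normed_vector) \<Rightarrow> real \<Rightarrow> 'a" where
  "iderv a b 0 f = f"
| "iderv a b (Suc k) f = (\<lambda>t. vector_derivative (iderv a b k f) (at t within {a..b}))"

definition smooth_on_interval :: "real \<Rightarrow> real \<Rightarrow> (real \<Rightarrow> 'a::real_normed_vector) \<Rightarrow> bool" where
  "smooth_on_interval a b f \<longleftrightarrow>
     (\<forall>k. \<forall>t\<in>{a..b}. (iderv a b k f has_vector_derivative iderv a b (Suc k) f t) (at t within {a..b}))"

definition ez :: "real^3" where "ez = vector [0, 0, 1]"

definition tproj :: "real^3 \<Rightarrow> real^3 \<Rightarrow> real^3" where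
  "tproj n w = w - (w \<bullet> n) *\<^sub>R n"

definition covD :: "real \<Rightarrow> (real \<Rightarrow> real^3) \<Rightarrow> (real \<Rightarrow> real^3) \<Rightarrow> real \<Rightarrow> real^3" where
  "covD T n W = (\<lambda>t. tproj (n t) (vector_derivative W (at t within {0..T})))"

definition Rcurv :: "real^3 \<Rightarrow> real^3 \<Rightarrow> real^3 \<Rightarrow> real^3" where
  "Rcurv a b c = (b \<bullet> c) *\<^sub>R a - (a \<bullet> c) *\<^sub>R b"

text \<open>Riemannian gradient of V(n) = Vt(n . e_z): tangential projection of the Euclidean
  gradient Vt'(x . e_z) e_z of the extension x |-> Vt(x . e_z); the derivative of Vt is
  taken within [-1,1].\<close>
definition gradV :: "(real \<Rightarrow> real) \<Rightarrow> real^3 \<Rightarrow> real^3" where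
  "gradV Vt n = tproj n (vector_derivative Vt (at (n \<bullet> ez) within {-1..1}) *\<^sub>R ez)"

text \<open>Killing field generating rotations about the z-axis.\<close>
definition Xkill :: "real^3 \<Rightarrow> real^3" where
  "Xkill n = cross3 ez n"

definition Jz :: "real \<Rightarrow> (real \<Rightarrow> real^3) \<Rightarrow> real \<Rightarrow> real" where
  "Jz T n t =
     (let nd = iderv 0 T 1 n; Dn = covD T n nd in
      vector_derivative Dn (at t within {0..T}) \<bullet> Xkill (n t)
      - Dn t \<bullet> covD T n (\<lambda>s. Xkill (n s)) t)"

end

theory Submission
  imports Defs
begin

lemma hvd_eq: "(f has_vector_derivative a) F \<Longrightarrow> a = b \<Longrightarrow> (f has_vector_derivative b) F"
  by simp

lemma hvd_inner:
  fixes f g :: "real \<Rightarrow> 'a::real_inner"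
  shows "(f has_vector_derivative f') (at x within s) \<Longrightarrow> (g has_vector_derivative g') (at x within s) \<Longrightarrow>
   ((\<lambda>x. f x \<bullet> g x) has_vector_derivative (f x \<bullet> g' + f' \<bullet> g x)) (at x within s)"
  by (rule bounded_bilinear.has_vector_derivative[OF bounded_bilinear_inner])

lemma hvd_scaleR:
  fixes g :: "real \<Rightarrow> 'a::real_normed_vector"
  shows "(f has_vector_derivative f') (at x within s) \<Longrightarrow> (g has_vector_derivative g') (at x within s) \<Longrightarrow>
   ((\<lambda>x. f x *\<^sub>R g x) has_vector_derivative (f x *\<^sub>R g' + f' *\<^sub>R g x)) (at x within s)"
  by (rule bounded_bilinear.has_vector_derivative[OF bounded_bilinear_scaleR])

lemma hvd_cross:
  "(g has_vector_derivative g') F \<Longrightarrow> ((\<lambda>x. cross3 c (g x)) has_vector_derivative cross3 c g') F"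
proof -
  have "linear (cross3 c)" using bilinear_cross unfolding bilinear_def by auto
  then have "bounded_linear (cross3 c)" by (simp add: linear_conv_bounded_linear)
  then show "(g has_vector_derivative g') F \<Longrightarrow> ((\<lambda>x. cross3 c (g x)) has_vector_derivative cross3 c g') F"
    by (rule bounded_linear.has_vector_derivative)
qed

lemma VD:
  fixes f :: "real \<Rightarrow> 'a::euclidean_space"
  shows "a < b \<Longrightarrow> t \<in> {a..b} \<Longrightarrow> (f has_vector_derivative f') (at t within {a..b}) \<Longrightarrow>
     vector_derivative f (at t within {a..b}) = f'"
  by (rule vector_derivative_within_closed_interval)

lemma const_deriv0:
  fixes f :: "real \<Rightarrow> real"
  assumes "a < b" "t \<in> {a..b}" "(f has_vector_derivative f') (at t within {a..b})"
    "\<forall>s\<in>{a..b}. f s = c"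
  shows "f' = 0"
proof -
  have "(f has_vector_derivative 0) (at t within {a..b})"
    by (rule has_vector_derivative_transform[where f="\<lambda>_. c"]) (use assms in auto)
  then have "vector_derivative f (at t within {a..b}) = 0" using assms VD by blast
  moreover have "vector_derivative f (at t within {a..b}) = f'" using assms VD by blast
  ultimately show ?thesis by simp
qed

lemma triple: "(a::real^3) \<bullet> cross3 c b = - (b \<bullet> cross3 c a)"
  by (simp add: cross3_simps)

lemma trip0: "(a::real^3) \<bullet> cross3 c a = 0" "(c::real^3) \<bullet> cross3 c a = 0"
  by (simp_all add: cross3_simps)

theorem mainTheorem7:
  fixes Vt :: "real \<Rightarrow> real" and n :: "real \<Rightarrow> real^3" and T :: real
  assumes Vsmooth: "smooth_on_interval (-1) 1 Vt"
    and nsmooth: "smooth_on_interval 0 T n"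
    and sphere: "\<forall>t\<in>{0..T}. norm (n t) = 1"
    and eq: "\<forall>t\<in>{0..T}.
       (let nd = iderv 0 T 1 n in
        covD T n (covD T n (covD T n nd)) t
        + Rcurv (covD T n nd t) (nd t) (nd t)
        + gradV Vt (n t) = 0)"
  shows "\<forall>t\<in>{0..T}. Jz T n t = Jz T n 0"
proof (cases "T > 0")
  case False
  show ?thesis
  proof
    fix t assume "t \<in> {0..T}"
    with False have "t = 0" by auto
    then show "Jz T n t = Jz T n 0" by simp
  qed
next
  case Tpos: True
  define N where "N k = iderv 0 T k n" for k
  have N0: "N 0 = n" by (simp add: N_def)
  have D: "\<And>k t. t \<in> {0..T} \<Longrightarrow> (N k has_vector_derivative N (Suc k) t) (at t within {0..T})"
    using nsmooth unfolding smooth_on_interval_def N_def by blast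
  have vd: "\<And>k t. t \<in> {0..T} \<Longrightarrow> vector_derivative (N k) (at t within {0..T}) = N (Suc k) t"
    using D VD Tpos by blast
  have Dn: "\<And>t. t \<in> {0..T} \<Longrightarrow> (n has_vector_derivative N 1 t) (at t within {0..T})"
    using D[of _ 0] N0 by simp
  let ?X = "\<lambda>t. cross3 ez (n t)"
  have s0: "\<forall>t\<in>{0..T}. n t \<bullet> n t = 1"
    using sphere by (simp add: dot_square_norm)
  have s1: "\<And>t. t \<in> {0..T} \<Longrightarrow> n t \<bullet> N 1 t = 0"
  proof -
    fix t assume t: "t \<in> {0..T}"
    have "((\<lambda>s. n s \<bullet> n s) has_vector_derivative (n t \<bullet> N 1 t + N 1 t \<bullet> n t)) (at t within {0..T})"
      by (rule hvd_inner[OF Dn[OF t] Dn[OF t]])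
    then have "n t \<bullet> N 1 t + N 1 t \<bullet> n t = 0"
      using const_deriv0[OF Tpos t _ s0] by blast
    then show "n t \<bullet> N 1 t = 0" by (simp add: inner_commute)
  qed
  have s2: "\<And>t. t \<in> {0..T} \<Longrightarrow> N 1 t \<bullet> N 1 t + n t \<bullet> N 2 t = 0"
  proof -
    fix t assume t: "t \<in> {0..T}"
    have "((\<lambda>s. n s \<bullet> N 1 s) has_vector_derivative (n t \<bullet> N 2 t + N 1 t \<bullet> N 1 t)) (at t within {0..T})"
      using hvd_inner[OF Dn[OF t] D[of t 1, OF t]] by (simp add: numeral_2_eq_2)
    then have "n t \<bullet> N 2 t + N 1 t \<bullet> N 1 t = 0"
      by (rule const_deriv0[OF Tpos t]) (use s1 in auto)
    then show "N 1 t \<bullet> N 1 t + n t \<bullet> N 2 t = 0" by linarith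
  qed
  have s3: "\<And>t. t \<in> {0..T} \<Longrightarrow> 3 * (N 1 t \<bullet> N 2 t) + n t \<bullet> N 3 t = 0"
  proof -
    fix t assume t: "t \<in> {0..T}"
    have D1: "(N 1 has_vector_derivative N 2 t) (at t within {0..T})"
      using D[of t 1, OF t] by (simp add: numeral_2_eq_2)
    have D2: "(N 2 has_vector_derivative N 3 t) (at t within {0..T})"
      using D[of t 2, OF t] by (simp add: numeral_3_eq_3 numeral_2_eq_2)
    have "((\<lambda>s. N 1 s \<bullet> N 1 s + n s \<bullet> N 2 s) has_vector_derivative
       ((N 1 t \<bullet> N 2 t + N 2 t \<bullet> N 1 t) + (n t \<bullet> N 3 t + N 1 t \<bullet> N 2 t))) (at t within {0..T})"
      by (intro has_vector_derivative_add hvd_inner D1 D2 Dn t)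
    then have "(N 1 t \<bullet> N 2 t + N 2 t \<bullet> N 1 t) + (n t \<bullet> N 3 t + N 1 t \<bullet> N 2 t) = 0"
      by (rule const_deriv0[OF Tpos t]) (use s2 in auto)
    then show "3 * (N 1 t \<bullet> N 2 t) + n t \<bullet> N 3 t = 0" by (simp add: inner_commute)
  qed
  have DD1: "\<And>t. t \<in> {0..T} \<Longrightarrow> (N 1 has_vector_derivative N 2 t) (at t within {0..T})"
    using D[of _ 1] by (simp add: numeral_2_eq_2)
  have DD2: "\<And>t. t \<in> {0..T} \<Longrightarrow> (N 2 has_vector_derivative N 3 t) (at t within {0..T})"
    using D[of _ 2] by (simp add: numeral_3_eq_3 numeral_2_eq_2)
  have DD3: "\<And>t. t \<in> {0..T} \<Longrightarrow> (N 3 has_vector_derivative N 4 t) (at t within {0..T})"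
    using D[of _ 3] by (simp add: numeral_3_eq_3 eval_nat_numeral)
  have vd1: "\<And>t. t \<in> {0..T} \<Longrightarrow> vector_derivative (N 1) (at t within {0..T}) = N 2 t"
    using DD1 VD Tpos by blast
  have N1def: "iderv 0 T 1 n = N 1" by (simp add: N_def)
  define A where "A t = N 2 t + (N 1 t \<bullet> N 1 t) *\<^sub>R n t" for t
  define Ad where "Ad t = N 3 t + (2*(N 1 t \<bullet> N 2 t)) *\<^sub>R n t + (N 1 t \<bullet> N 1 t) *\<^sub>R N 1 t" for t
  define B where "B t = N 3 t + (3*(N 1 t \<bullet> N 2 t)) *\<^sub>R n t + (N 1 t \<bullet> N 1 t) *\<^sub>R N 1 t" for t
  define Bd where "Bd t = N 4 t + (3*(N 2 t \<bullet> N 2 t + N 1 t \<bullet> N 3 t)) *\<^sub>R n t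
     + (5*(N 1 t \<bullet> N 2 t)) *\<^sub>R N 1 t + (N 1 t \<bullet> N 1 t) *\<^sub>R N 2 t" for t
  have hAd: "\<And>t. t \<in> {0..T} \<Longrightarrow> (A has_vector_derivative Ad t) (at t within {0..T})"
  proof -
    fix t assume t: "t \<in> {0..T}"
    show "(A has_vector_derivative Ad t) (at t within {0..T})"
      unfolding A_def
      apply (rule hvd_eq)
       apply (rule has_vector_derivative_add hvd_scaleR hvd_inner DD1[OF t] DD2[OF t] Dn[OF t] DD1[OF t, unfolded One_nat_def])+
      apply (simp add: Ad_def inner_commute algebra_simps)
      done
  qed
  have hBd: "\<And>t. t \<in> {0..T} \<Longrightarrow> (B has_vector_derivative Bd t) (at t within {0..T})"
  proof -
    fix t assume t: "t \<in> {0..T}"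
    show "(B has_vector_derivative Bd t) (at t within {0..T})"
      unfolding B_def
      apply (rule hvd_eq)
       apply (rule has_vector_derivative_add hvd_scaleR hvd_inner has_vector_derivative_mult has_vector_derivative_const DD1[OF t] DD2[OF t] DD3[OF t] Dn[OF t] DD1[OF t, unfolded One_nat_def])+
      apply (simp add: Bd_def inner_commute algebra_simps)
      apply (simp add: scaleR_add_left[symmetric])
      done
  qed
  have c1: "\<And>t. t \<in> {0..T} \<Longrightarrow> covD T n (N 1) t = A t"
  proof -
    fix t assume t: "t \<in> {0..T}"
    have "N 2 t \<bullet> n t = - (N 1 t \<bullet> N 1 t)" using s2[OF t] by (simp add: inner_commute)
    then show "covD T n (N 1) t = A t"
      unfolding covD_def tproj_def vd1[OF t] A_def by simp
  qed
  have vdA: "\<And>t. t \<in> {0..T} \<Longrightarrow> vector_derivative (covD T n (N 1)) (at t within {0..T}) = Ad t"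
  proof -
    fix t assume t: "t \<in> {0..T}"
    have "(covD T n (N 1) has_vector_derivative Ad t) (at t within {0..T})"
      by (rule has_vector_derivative_transform[OF t c1 hAd[OF t]])
    then show "vector_derivative (covD T n (N 1)) (at t within {0..T}) = Ad t"
      using VD Tpos t by blast
  qed
  have c2: "\<And>t. t \<in> {0..T} \<Longrightarrow> covD T n (covD T n (N 1)) t = B t"
  proof -
    fix t assume t: "t \<in> {0..T}"
    have "Ad t \<bullet> n t = N 3 t \<bullet> n t + 2*(N 1 t \<bullet> N 2 t) * (n t \<bullet> n t) + (N 1 t \<bullet> N 1 t) * (N 1 t \<bullet> n t)"
      by (simp add: Ad_def inner_add_left)
    also have "\<dots> = - (N 1 t \<bullet> N 2 t)"
      using s0 t s1[OF t] s3[OF t] by (simp add: inner_commute)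
    finally have "Ad t \<bullet> n t = - (N 1 t \<bullet> N 2 t)" .
    then show "covD T n (covD T n (N 1)) t = B t"
      unfolding covD_def[of T n "covD T n (N 1)"] tproj_def vdA[OF t] B_def Ad_def by (simp add: algebra_simps) (simp add: scaleR_add_left[symmetric])
  qed
  have vdB: "\<And>t. t \<in> {0..T} \<Longrightarrow> vector_derivative (covD T n (covD T n (N 1))) (at t within {0..T}) = Bd t"
  proof -
    fix t assume t: "t \<in> {0..T}"
    have "(covD T n (covD T n (N 1)) has_vector_derivative Bd t) (at t within {0..T})"
      by (rule has_vector_derivative_transform[OF t c2 hBd[OF t]])
    then show "vector_derivative (covD T n (covD T n (N 1))) (at t within {0..T}) = Bd t"
      using VD Tpos t by blast
  qed
  have c3: "\<And>t. t \<in> {0..T} \<Longrightarrow> covD T n (covD T n (covD T n (N 1))) t = tproj (n t) (Bd t)"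
    unfolding covD_def[of T n "covD T n (covD T n (N 1))"] using vdB by simp
  have cX: "\<And>t. t \<in> {0..T} \<Longrightarrow> covD T n (\<lambda>s. Xkill (n s)) t = tproj (n t) (cross3 ez (N 1 t))"
  proof -
    fix t assume t: "t \<in> {0..T}"
    have "((\<lambda>s. Xkill (n s)) has_vector_derivative cross3 ez (N 1 t)) (at t within {0..T})"
      unfolding Xkill_def by (rule hvd_cross[OF Dn[OF t]])
    then have "vector_derivative (\<lambda>s. Xkill (n s)) (at t within {0..T}) = cross3 ez (N 1 t)"
      using VD Tpos t by blast
    then show "covD T n (\<lambda>s. Xkill (n s)) t = tproj (n t) (cross3 ez (N 1 t))"
      by (simp add: covD_def)
  qed
  define J where "J t = N 3 t \<bullet> ?X t - N 2 t \<bullet> cross3 ez (N 1 t)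
     + 2 * (N 1 t \<bullet> N 1 t) * (N 1 t \<bullet> ?X t)" for t
  have Jeq: "\<And>t. t \<in> {0..T} \<Longrightarrow> Jz T n t = J t"
  proof -
    fix t assume t: "t \<in> {0..T}"
    have nX: "n t \<bullet> ?X t = 0" by (simp add: trip0)
    have nn: "n t \<bullet> n t = 1" using s0 t by auto
    have "A t \<bullet> n t = N 2 t \<bullet> n t + (N 1 t \<bullet> N 1 t) * (n t \<bullet> n t)"
      by (simp add: A_def inner_add_left)
    then have An: "A t \<bullet> n t = 0" using s2[OF t] nn by (simp add: inner_commute)
    have e1: "Ad t \<bullet> ?X t = N 3 t \<bullet> ?X t + (N 1 t \<bullet> N 1 t) * (N 1 t \<bullet> ?X t)"
      using nX by (simp add: Ad_def inner_add_left)
    have e2: "A t \<bullet> tproj (n t) (cross3 ez (N 1 t)) = A t \<bullet> cross3 ez (N 1 t)"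
      using An by (simp add: tproj_def inner_diff_right inner_commute)
    have e3: "A t \<bullet> cross3 ez (N 1 t) = N 2 t \<bullet> cross3 ez (N 1 t) - (N 1 t \<bullet> N 1 t) * (N 1 t \<bullet> ?X t)"
      using triple[of "n t" ez "N 1 t"] by (simp add: A_def inner_add_left)
    show "Jz T n t = J t"
      unfolding Jz_def Let_def N1def vdA[OF t] c1[OF t] cX[OF t] e2 e3
      by (simp add: Xkill_def e1 J_def)
  qed
  have E: "\<And>t. t \<in> {0..T} \<Longrightarrow> N 4 t \<bullet> ?X t + 4 * (N 1 t \<bullet> N 2 t) * (N 1 t \<bullet> ?X t)
       + 2 * (N 1 t \<bullet> N 1 t) * (N 2 t \<bullet> ?X t) = 0"
  proof -
    fix t assume t: "t \<in> {0..T}"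
    have nX: "n t \<bullet> ?X t = 0" by (simp add: trip0)
    have ezX: "ez \<bullet> ?X t = 0" by (simp add: trip0)
    have q: "tproj (n t) (Bd t) + Rcurv (A t) (N 1 t) (N 1 t) + gradV Vt (n t) = 0"
    proof -
      have q0: "covD T n (covD T n (covD T n (N 1))) t + Rcurv (covD T n (N 1) t) (N 1 t) (N 1 t)
         + gradV Vt (n t) = 0" using eq t unfolding Let_def N1def by blast
      show ?thesis using q0 unfolding c1[OF t] c3[OF t] .
    qed
    have q1: "tproj (n t) (Bd t) \<bullet> ?X t = N 4 t \<bullet> ?X t + 5 * (N 1 t \<bullet> N 2 t) * (N 1 t \<bullet> ?X t)
       + (N 1 t \<bullet> N 1 t) * (N 2 t \<bullet> ?X t)"
      using nX by (simp add: tproj_def Bd_def inner_add_left inner_diff_left)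
    have Av: "A t \<bullet> N 1 t = N 1 t \<bullet> N 2 t"
      using s1[OF t] by (simp add: A_def inner_add_right inner_add_left inner_commute)
    have q2: "Rcurv (A t) (N 1 t) (N 1 t) \<bullet> ?X t = (N 1 t \<bullet> N 1 t) * (N 2 t \<bullet> ?X t)
        - (N 1 t \<bullet> N 2 t) * (N 1 t \<bullet> ?X t)"
      using nX Av by (simp add: Rcurv_def A_def inner_add_left inner_diff_left algebra_simps)
    have q3: "gradV Vt (n t) \<bullet> ?X t = 0"
      using nX ezX by (simp add: gradV_def tproj_def inner_diff_left)
    have "(tproj (n t) (Bd t) + Rcurv (A t) (N 1 t) (N 1 t) + gradV Vt (n t)) \<bullet> ?X t = 0"
      using q by simp
    then show "N 4 t \<bullet> ?X t + 4 * (N 1 t \<bullet> N 2 t) * (N 1 t \<bullet> ?X t)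
       + 2 * (N 1 t \<bullet> N 1 t) * (N 2 t \<bullet> ?X t) = 0"
      unfolding inner_add_left q1 q2 q3 by (simp add: algebra_simps)
  qed
  have Jd: "\<And>t. t \<in> {0..T} \<Longrightarrow> (J has_vector_derivative 0) (at t within {0..T})"
  proof -
    fix t assume t: "t \<in> {0..T}"
    show "(J has_vector_derivative 0) (at t within {0..T})"
      unfolding J_def
      apply (rule hvd_eq)
       apply (rule has_vector_derivative_add has_vector_derivative_diff hvd_inner hvd_cross
          has_vector_derivative_mult has_vector_derivative_const DD1[OF t] DD2[OF t] DD3[OF t] Dn[OF t] DD1[OF t, unfolded One_nat_def])+
      using E[OF t] by (simp add: trip0 inner_commute algebra_simps)
  qed
  have "\<exists>c. \<forall>t\<in>{0..T}. J t = c"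
    by (rule has_derivative_zero_constant) (use Jd in \<open>auto simp: has_vector_derivative_def\<close>)
  then obtain c where "\<forall>t\<in>{0..T}. J t = c" by blast
  then show ?thesis using Jeq Tpos by simp
qed

end
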